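(* Let $N=2^L$ with $L\ge1$ and channel numbers $r_0,\dots,r_{L-1}\ge1$, and fix an output index $y$. There exist representation functions $f_{\theta_1},\dots,f_{\theta_M}\in\mathcal F$ and weights for the deep ConvNet with ReLU activation and max pooling such that its score function $h^D_y$ is not equal (as a function on $(\mathbb R^s)^N$) to the score function $h^S_y$ of any shallow ConvNet with ReLU activation and max pooling whose number of hidden channels satisfies $Z<\min\{r_0,M\}^{N/2}\cdot\frac{2}{M\cdot N}$ (for any choice of its representation functions in $\mathcal F$ and its weights).
   Context: Inputs are $X=(\mathbf x_1,\dots,\mathbf x_N)\in(\mathbb R^s)^N$. Representation functions are taken from a parametric family $\mathcal F=\{f_\theta:\mathbb R^s\to\mathbb R:\theta\in\Theta\}$ assumed throughout to satisfy: (continuity) $f_\theta(\mathbf x)$ is continuous in $\theta$ and $\mathbf x$; (non-degeneracy) for any pairwise distinct $\mathbf x^{(1)},\dots,\mathbf x^{(M)}\in\mathbb R^s$ there exist $f_{\theta_1},\dots,f_{\theta_M}\in\mathcal F$ such that $F=(f_{\theta_d}(\mathbf x^{(i)}))_{i,d\in[M]}$ is non-singular. ReLU activation with max pooling means $\sigma(z)=\max\{0,z\}$ and $P=\max$. Shallow ConvNet with $Z$ hidden channels: given $f_{\theta_1},\dots,f_{\theta_M}\in\mathcal F$, weights $\mathbf a^{z,i}\in\mathbb R^M$ ($z\in[Z],i\in[N]$), $\mathbf a^y\in\mathbb R^Z$: $h^S_y(X)=\sum_{z=1}^Z a^y_z\,P_{i\in[N]}\big(\sigma(\sum_{d=1}^M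 a^{z,i}_d f_{\theta_d}(\mathbf x_i))\big)$. Deep ConvNet with channel numbers $r_0,\dots,r_{L-1}$: given $f_{\theta_1},\dots,f_{\theta_M}\in\mathcal F$, weights $\mathbf a^{0,j,\gamma}\in\mathbb R^M$ ($j\in[N],\gamma\in[r_0]$), $\mathbf a^{l,j,\gamma}\in\mathbb R^{r_{l-1}}$ ($l\in[L-1]$, $j\in[N/2^l]$, $\gamma\in[r_l]$), $\mathbf a^{L,1,y}\in\mathbb R^{r_{L-1}}$: $u^0_{j,\gamma}=\sigma(\sum_d a^{0,j,\gamma}_d f_{\theta_d}(\mathbf x_j))$; for $l=0,\dots,L-1$, $v^l_{j,\gamma}=P(u^l_{2j-1,\gamma},u^l_{2j,\gamma})$ for $j\in[N/2^{l+1}]$, and for $l\ge1$, $u^l_{j,\gamma}=\sigma(\sum_{\alpha=1}^{r_{l-1}}a^{l,j,\gamma}_\alpha v^{l-1}_{j,\alpha})$ for $j\in[N/2^l]$; $h^D_y(X)=\sum_{\alpha=1}^{r_{L-1}}a^{L,1,y}_\alpha v^{L-1}_{1,\alpha}$. *)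

theory Defs
  imports "HOL-Analysis.Analysis" "Jordan_Normal_Form.Determinant"
begin

definition relu :: "real \<Rightarrow> real" where
  "relu z = max 0 z"

definition rep_matrix :: "('p \<Rightarrow> 'x \<Rightarrow> real) \<Rightarrow> nat \<Rightarrow> (nat \<Rightarrow> 'p) \<Rightarrow> (nat \<Rightarrow> 'x) \<Rightarrow> real mat" where
  "rep_matrix f M th xs = mat M M (\<lambda>(i, d). f (th d) (xs i))"

text \<open>Shallow ConvNet score h^S_y (ReLU, max pooling); indices 0-based:
  z < Z, i < N, d < M.  Weights a z i d = a^{z,i}_d, ay y z = a^y_z.\<close>
definition shallow_score ::
  "('p \<Rightarrow> 'x \<Rightarrow> real) \<Rightarrow> nat \<Rightarrow> nat \<Rightarrow> nat \<Rightarrow> (nat \<Rightarrow> 'p)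
   \<Rightarrow> (nat \<Rightarrow> nat \<Rightarrow> nat \<Rightarrow> real) \<Rightarrow> (nat \<Rightarrow> nat \<Rightarrow> real) \<Rightarrow> nat \<Rightarrow> (nat \<Rightarrow> 'x) \<Rightarrow> real" where
  "shallow_score f N M Z th a ay y X =
     (\<Sum>z<Z. ay y z * Max ((\<lambda>i. relu (\<Sum>d<M. a z i d * f (th d) (X i))) ` {..<N}))"

text \<open>Deep ConvNet hidden units u^l_{j,gamma} (0-based j, gamma).
  A0 j g d = a^{0,j,g}_d;  A l j g alpha = a^{l,j,g}_alpha for l >= 1;
  pooling v^l_{j,g} = max (u^l_{2j,g}) (u^l_{2j+1,g}).\<close>
fun deep_u ::
  "('p \<Rightarrow> 'x \<Rightarrow> real) \<Rightarrow> nat \<Rightarrow> (nat \<Rightarrow> 'p) \<Rightarrow> (nat \<Rightarrow> nat)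
   \<Rightarrow> (nat \<Rightarrow> nat \<Rightarrow> nat \<Rightarrow> real) \<Rightarrow> (nat \<Rightarrow> nat \<Rightarrow> nat \<Rightarrow> nat \<Rightarrow> real)
   \<Rightarrow> (nat \<Rightarrow> 'x) \<Rightarrow> nat \<Rightarrow> nat \<Rightarrow> nat \<Rightarrow> real" where
  "deep_u f M th r A0 A X 0 j g = relu (\<Sum>d<M. A0 j g d * f (th d) (X j))"
| "deep_u f M th r A0 A X (Suc l) j g =
     relu (\<Sum>al<r l. A (Suc l) j g al *
             max (deep_u f M th r A0 A X l (2*j) al) (deep_u f M th r A0 A X l (2*j+1) al))"

definition deep_v ::
  "('p \<Rightarrow> 'x \<Rightarrow> real) \<Rightarrow> nat \<Rightarrow> (nat \<Rightarrow> 'p) \<Rightarrow> (nat \<Rightarrow> nat)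
   \<Rightarrow> (nat \<Rightarrow> nat \<Rightarrow> nat \<Rightarrow> real) \<Rightarrow> (nat \<Rightarrow> nat \<Rightarrow> nat \<Rightarrow> nat \<Rightarrow> real)
   \<Rightarrow> (nat \<Rightarrow> 'x) \<Rightarrow> nat \<Rightarrow> nat \<Rightarrow> nat \<Rightarrow> real" where
  "deep_v f M th r A0 A X l j g =
     max (deep_u f M th r A0 A X l (2*j) g) (deep_u f M th r A0 A X l (2*j+1) g)"

text \<open>Deep ConvNet score h^D_y with L layers; Aout y alpha = a^{L,1,y}_alpha.\<close>
definition deep_score ::
  "('p \<Rightarrow> 'x \<Rightarrow> real) \<Rightarrow> nat \<Rightarrow> nat \<Rightarrow> (nat \<Rightarrow> 'p) \<Rightarrow> (nat \<Rightarrow> nat)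
   \<Rightarrow> (nat \<Rightarrow> nat \<Rightarrow> nat \<Rightarrow> real) \<Rightarrow> (nat \<Rightarrow> nat \<Rightarrow> nat \<Rightarrow> nat \<Rightarrow> real)
   \<Rightarrow> (nat \<Rightarrow> nat \<Rightarrow> real) \<Rightarrow> nat \<Rightarrow> (nat \<Rightarrow> 'x) \<Rightarrow> real" where
  "deep_score f L M th r A0 A Aout y X =
     (\<Sum>al<r (L - 1). Aout y al * deep_v f M th r A0 A X (L - 1) 0 al)"

end

theory Submission
  imports Defs "HOL-Library.Function_Algebras"
begin


definition fsc :: "real \<Rightarrow> ('c \<Rightarrow> real) \<Rightarrow> ('c \<Rightarrow> real)" where
  "fsc c v = (\<lambda>x. c * v x)"

interpretation fv: vector_space "fsc :: real \<Rightarrow> ('c \<Rightarrow> real) \<Rightarrow> ('c \<Rightarrow> real)"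
  by unfold_locales (auto simp: fsc_def fun_eq_iff algebra_simps)

lemma sum_fun_apply: "(\<Sum>i\<in>A. (g i :: 'c \<Rightarrow> real)) x = (\<Sum>i\<in>A. g i x)"
  by (induction A rule: infinite_finite_induct) auto

lemma rank_contra:
  fixes rho :: "'r \<Rightarrow> ('c \<Rightarrow> real)"
  assumes "finite S" "rho ` R \<subseteq> fv.span S" "fv.independent (rho ` R)" "inj_on rho R"
    "card S < card R" "finite R"
  shows False
proof -
  have "card (rho ` R) \<le> card S" using fv.independent_span_bound[OF assms(1) assms(3) assms(2)] by simp
  with card_image[OF assms(4)] assms(5) show False by simp
qed

lemma indep_rows:
  fixes rho :: "'r \<Rightarrow> ('r \<Rightarrow> real)"
  assumes fin: "finite R" and val: "\<And>a b. a\<in>R \<Longrightarrow> b\<in>R \<Longrightarrow> rho a b = (if a = b then 1 else 2)"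
  shows "inj_on rho R" "fv.independent (rho ` R)"
proof -
  show inj: "inj_on rho R"
  proof (rule inj_onI)
    fix a b assume "a \<in> R" "b \<in> R" "rho a = rho b"
    then have "rho a a = rho b a" by simp
    with val[OF \<open>a\<in>R\<close> \<open>a\<in>R\<close>] val[OF \<open>b\<in>R\<close> \<open>a\<in>R\<close>] show "a = b"
      by (auto split: if_splits)
  qed
  show "fv.independent (rho ` R)"
  proof (rule fv.independent_if_scalars_zero)
    show "finite (rho ` R)" using fin by simp
    fix u x assume sum0: "(\<Sum>x\<in>rho ` R. fsc (u x) x) = 0" and x: "x \<in> rho ` R"
    define c where "c a = u (rho a)" for a
    have s0: "(\<Sum>a\<in>R. fsc (c a) (rho a)) = 0"
      using sum0 by (simp add: sum.reindex[OF inj] c_def)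
    define S where "S = (\<Sum>a\<in>R. c a)"
    have cb: "c b = 2 * S" if b: "b \<in> R" for b
    proof -
      have "0 = (\<Sum>a\<in>R. fsc (c a) (rho a)) b" using s0 by simp
      also have "\<dots> = (\<Sum>a\<in>R. c a * rho a b)" by (simp add: sum_fun_apply fsc_def)
      also have "\<dots> = (\<Sum>a\<in>R. 2 * c a - (if a = b then c a else 0))"
        by (rule sum.cong) (auto simp: val b)
      also have "\<dots> = 2 * S - c b"
        by (simp add: sum_subtractf sum_distrib_left[symmetric] S_def fin b)
      finally show ?thesis by simp
    qed
    have "S = (\<Sum>b\<in>R. 2 * S)"
    proof -
      have "(\<Sum>b\<in>R. c b) = (\<Sum>b\<in>R. 2 * S)" by (rule sum.cong) (simp_all add: cb)
      thus ?thesis by (simp only: S_def[symmetric])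
    qed
    also have "\<dots> = real (card R) * 2 * S" by simp
    finally have "S * (real (card R) * 2 - 1) = 0" by (simp add: algebra_simps)
    moreover have "card R \<ge> 1" using x fin by (metis card_0_eq empty_iff image_empty less_one not_le)
    ultimately have "S = 0" by simp
    then show "u x = 0" using x cb by (auto simp: c_def)
  qed
qed



lemma relu_pos[simp]: "x \<ge> 0 \<Longrightarrow> relu x = x" by (simp add: relu_def)

lemma layer1_sum:
  fixes uu :: "nat \<Rightarrow> nat \<Rightarrow> real"
  assumes uu: "\<And>j g. uu j g = (if g < m \<and> k j = g then 1 else 0)"
    and km: "\<And>i. k i < m" and mr: "m \<le> r0"
  shows "(\<Sum>al<r0. max (uu a al) (uu b al)) = (if k a = k b then 1 else 2)"
proof -
  have "(\<Sum>al<r0. max (uu a al) (uu b al)) = (\<Sum>al\<in>{..<r0}. if al \<in> {k a, k b} then 1 else 0)"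
    by (rule sum.cong) (auto simp: uu km)
  also have "\<dots> = (\<Sum>al\<in>{al\<in>{..<r0}. al \<in> {k a, k b}}. (1::real))"
    by (rule sum.inter_filter[symmetric]) simp
  also have "{al\<in>{..<r0}. al \<in> {k a, k b}} = {k a, k b}"
    using km[of a] km[of b] mr by auto
  finally show ?thesis by simp
qed

lemma split_cond:
  fixes P :: "nat \<Rightarrow> bool"
  shows "(\<forall>t<2*p. P t) \<longleftrightarrow> (\<forall>t<p. P t) \<and> (\<forall>t<p. P (p + t))"
proof safe
  fix t assume a: "\<forall>t<p. P t" "\<forall>t<p. P (p + t)" and t: "t < 2*p"
  show "P t"
  proof (cases "t < p")
    case True then show ?thesis using a by simp
  next
    case False then have "t = p + (t - p)" "t - p < p" using t by auto
    then show ?thesis using a(2) by metis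
  qed
qed auto

lemma comb_cond:
  fixes k :: "nat \<Rightarrow> 'b" and j l :: nat
  assumes "1 \<le> l"
  shows "(\<forall>t<2^l. k (j*2^Suc l + 2*t) = k (j*2^Suc l + 2*t + 1)) \<longleftrightarrow>
    (\<forall>t<2^(l-1). k ((2*j)*2^l + 2*t) = k ((2*j)*2^l + 2*t + 1)) \<and>
    (\<forall>t<2^(l-1). k ((2*j+1)*2^l + 2*t) = k ((2*j+1)*2^l + 2*t + 1))"
proof -
  obtain l' where l': "l = Suc l'" using assms by (cases l) auto
  define p where "p = (2::nat)^l'"
  have l: "(2::nat)^l = 2*p" "(2::nat)^Suc l = 4*p" "l - 1 = l'" by (simp_all add: l' p_def)
  have e1: "(2*j)*(2*p) + 2*t = j*(4*p) + 2*t" for t by simp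
  have e2: "(2*j+1)*(2*p) + 2*t = j*(4*p) + 2*(p+t)" for t by (simp add: algebra_simps)
  show ?thesis unfolding l(1) l(2) l(3) p_def[symmetric] e1 e2
    by (rule split_cond)
qed

lemma deep_u_val:
  assumes u0: "\<And>j g. deep_u f M th r A0 A X 0 j g = (if g < m \<and> k j = g then 1 else 0)"
    and km: "\<And>i. k i < m" and mr: "m \<le> r 0"
    and A: "\<And>l j g al. A (Suc l) j g al = (if l = 0 then 1 else if al = 0 then 1 else 0)"
    and r: "\<forall>l<L. r l \<ge> 1"
  shows "1 \<le> l \<Longrightarrow> l < L \<Longrightarrow> deep_u f M th r A0 A X l j g =
     (if (\<forall>t<2^(l-1). k (j*2^l+2*t) = k (j*2^l+2*t+1)) then 1 else 2)"
proof (induction l arbitrary: j g)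
  case 0 thus ?case by simp
next
  case (Suc l)
  show ?case
  proof (cases "l = 0")
    case True
    have "deep_u f M th r A0 A X (Suc 0) j g =
       relu (\<Sum>al<r 0. max (deep_u f M th r A0 A X 0 (2*j) al) (deep_u f M th r A0 A X 0 (2*j+1) al))"
      by (simp add: A)
    also have "\<dots> = (if k (2*j) = k (2*j+1) then 1 else 2)"
      by (subst layer1_sum[where uu="deep_u f M th r A0 A X 0", OF u0 km mr]) auto
    finally show ?thesis using True by (simp add: mult.commute)
  next
    case False
    have rl: "r l \<ge> 1" using r Suc.prems by auto
    define F where "F al = max (deep_u f M th r A0 A X l (2*j) al) (deep_u f M th r A0 A X l (2*j+1) al)" for al
    have "deep_u f M th r A0 A X (Suc l) j g = relu (\<Sum>al<r l. A (Suc l) j g al * F al)"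
      by (simp add: F_def)
    also have "(\<Sum>al<r l. A (Suc l) j g al * F al) = (\<Sum>al<r l. if al = 0 then F al else 0)"
      by (rule sum.cong) (auto simp: A False)
    also have "\<dots> = F 0" using rl by (subst sum.delta) auto
    also have "relu (F 0) = relu (max (deep_u f M th r A0 A X l (2*j) 0) (deep_u f M th r A0 A X l (2*j+1) 0))"
      by (simp add: F_def)
    also have "\<dots> = (if (\<forall>t<2^(l-1). k ((2*j)*2^l + 2*t) = k ((2*j)*2^l + 2*t + 1)) \<and>
    (\<forall>t<2^(l-1). k ((2*j+1)*2^l + 2*t) = k ((2*j+1)*2^l + 2*t + 1)) then 1 else 2)"
      using Suc.IH[of "2*j" 0] Suc.IH[of "2*j+1" 0] False Suc.prems by simp
    also have "\<dots> = (if (\<forall>t<2^l. k (j*2^Suc l + 2*t) = k (j*2^Suc l + 2*t + 1)) then 1 else 2)"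
      using comb_cond[of l k j] False by simp
    finally show ?thesis by simp
  qed
qed



lemma deep_score_val:
  assumes u0: "\<And>j g. deep_u f M th r A0 A X 0 j g = (if g < m \<and> k j = g then 1 else 0)"
    and km: "\<And>i. k i < m" and mr: "m \<le> r 0"
    and A: "\<And>l j g al. A (Suc l) j g al = (if l = 0 then 1 else if al = 0 then 1 else 0)"
    and r: "\<forall>l<L. r l \<ge> 1" and L: "L \<ge> 1"
    and Aout: "\<And>al. Aout y al = (if L = 1 then 1 else if al = 0 then 1 else 0)"
  shows "deep_score f L M th r A0 A Aout y X = (if (\<forall>t<2^(L-1). k (2*t) = k (2*t+1)) then 1 else 2)"
proof (cases "L = 1")
  case True
  have "deep_score f L M th r A0 A Aout y X =
    (\<Sum>al<r 0. max (deep_u f M th r A0 A X 0 0 al) (deep_u f M th r A0 A X 0 1 al))"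
    by (simp add: deep_score_def deep_v_def Aout True)
  also have "\<dots> = (if k 0 = k 1 then 1 else 2)"
    by (rule layer1_sum[where uu="deep_u f M th r A0 A X 0", OF u0 km mr])
  finally show ?thesis using True by simp
next
  case False
  define F where "F al = deep_v f M th r A0 A X (L - 1) 0 al" for al
  have rl: "r (L-1) \<ge> 1" using r L by auto
  have "deep_score f L M th r A0 A Aout y X = (\<Sum>al<r (L-1). Aout y al * F al)"
    by (simp add: deep_score_def F_def)
  also have "\<dots> = (\<Sum>al<r (L-1). if al = 0 then F al else 0)"
    using False by (intro sum.cong) (simp_all add: Aout)
  also have "\<dots> = F 0" using rl by (subst sum.delta) auto
  also have "F 0 = max (deep_u f M th r A0 A X (L-1) 0 0) (deep_u f M th r A0 A X (L-1) 1 0)"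
    by (simp add: F_def deep_v_def)
  also have "\<dots> = (if (\<forall>t<2^(L-1-1). k ((2*0)*2^(L-1) + 2*t) = k ((2*0)*2^(L-1) + 2*t + 1)) \<and>
    (\<forall>t<2^(L-1-1). k ((2*0+1)*2^(L-1) + 2*t) = k ((2*0+1)*2^(L-1) + 2*t + 1)) then 1 else 2)"
    using deep_u_val[OF u0 km mr A r, of "L-1" 0 0] deep_u_val[OF u0 km mr A r, of "L-1" 1 0] False L
    by simp
  also have "\<dots> = (if (\<forall>t<2^(L-1). k (0*2^Suc (L-1) + 2*t) = k (0*2^Suc (L-1) + 2*t + 1)) then 1 else 2)"
    using comb_cond[of "L-1" k 0] False L by simp
  finally show ?thesis by simp
qed

lemma u0_val:
  assumes B: "\<And>kk g. kk<m \<Longrightarrow> g<m \<Longrightarrow> (\<Sum>d<m. f (th d) (xs kk) * Bm d g) = (if kk = g then 1 else 0)"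
    and A0: "\<And>j g d. A0 j g d = (if d < m \<and> g < m then Bm d g else 0)"
    and mM: "m \<le> M" and X: "\<And>i. X i = xs (k i)" and km: "\<And>i. k i < m"
  shows "deep_u f M th r A0 A X 0 j g = (if g < m \<and> k j = g then 1 else 0)"
proof (cases "g < m")
  case False
  then show ?thesis by (simp add: A0 relu_def)
next
  case True
  have "(\<Sum>d<M. A0 j g d * f (th d) (X j)) = (\<Sum>d\<in>{..<M}. if d < m then f (th d) (xs (k j)) * Bm d g else 0)"
    by (rule sum.cong) (auto simp: A0 True X)
  also have "\<dots> = (\<Sum>d\<in>{d\<in>{..<M}. d < m}. f (th d) (xs (k j)) * Bm d g)"
    by (rule sum.inter_filter[symmetric]) simp
  also have "{d\<in>{..<M}. d < m} = {..<m}" using mM by auto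
  also have "(\<Sum>d<m. f (th d) (xs (k j)) * Bm d g) = (if k j = g then 1 else 0)"
    using B[OF km True] .
  finally show ?thesis using True by (simp add: relu_def)
qed

lemma inv_exists:
  assumes "det (rep_matrix f m th xs) \<noteq> (0::real)"
  shows "\<exists>Bm. \<forall>kk<m. \<forall>g<m. (\<Sum>d<m. f (th d) (xs kk) * Bm d g) = (if kk = g then 1 else 0)"
proof -
  have F: "rep_matrix f m th xs \<in> carrier_mat m m" by (simp add: rep_matrix_def)
  from det_non_zero_imp_unit[OF F assms, unfolded Units_def, of "()"]
  obtain B where B: "B \<in> carrier_mat m m" and FB: "rep_matrix f m th xs * B = 1\<^sub>m m"
    by (auto simp: ring_mat_def)
  show ?thesis
  proof (intro exI allI impI)
    fix kk g assume kk: "kk < m" and g: "g < m"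
    have "(rep_matrix f m th xs * B) $$ (kk, g) = (1\<^sub>m m) $$ (kk, g)" using FB by simp
    then show "(\<Sum>d<m. f (th d) (xs kk) * (\<lambda>d g. B $$ (d, g)) d g) = (if kk = g then 1 else 0)"
      using B kk g by (simp add: index_mult_mat scalar_prod_def rep_matrix_def atLeast0LessThan)
  qed
qed



theorem claim9:
  fixes f :: "'p::topological_space \<Rightarrow> real^'s \<Rightarrow> real"
    and \<Theta> :: "'p set"
    and L N M y :: nat
    and r :: "nat \<Rightarrow> nat"
  assumes cont: "continuous_on (\<Theta> \<times> UNIV) (\<lambda>(\<theta>, x). f \<theta> x)"
    and nondeg: "\<And>K (xs :: nat \<Rightarrow> real^'s).
       (\<forall>i<K. \<forall>j<K. i \<noteq> j \<longrightarrow> xs i \<noteq> xs j) \<Longrightarrow>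
       \<exists>th. (\<forall>d<K. th d \<in> \<Theta>) \<and> det (rep_matrix f K th xs) \<noteq> 0"
    and L: "L \<ge> 1"
    and N: "N = 2 ^ L"
    and r: "\<forall>l<L. r l \<ge> 1"
  shows "\<exists>th A0 A Aout. (\<forall>d<M. th d \<in> \<Theta>) \<and>
     (\<forall>Z th' a ay. (\<forall>d<M. th' d \<in> \<Theta>) \<and>
        real Z < real (min (r 0) M) ^ (N div 2) * 2 / (real M * real N) \<longrightarrow>
        (\<lambda>X. deep_score f L M th r A0 A Aout y X) \<noteq> (\<lambda>X. shallow_score f N M Z th' a ay y X))"
proof (cases "M = 0")
  case True
  then show ?thesis by simp
next
  case False
  define m where "m = min (r 0) M"
  define h where "h = N div 2"
  have r0: "r 0 \<ge> 1" using r L by auto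
  have m1: "m \<ge> 1" and mM: "m \<le> M" and mr: "m \<le> r 0" using False r0 by (auto simp: m_def)
  obtain L' where L': "L = Suc L'" using L by (cases L) auto
  have hL: "h = 2^(L-1)" by (simp add: h_def N L')
  have h1: "h \<ge> 1" using hL by simp
  have Nh: "N = 2*h" by (simp add: h_def N L')
  have h0: "0 \<in> {..<h}" using h1 by simp
  have hne: "{..<h} \<noteq> {}" using h0 by blast
  define xs :: "nat \<Rightarrow> real^'s" where "xs q = (\<chi> i. real q)" for q
  have xs_inj: "xs i \<noteq> xs j" if "i \<noteq> j" for i j
  proof
    assume "xs i = xs j"
    then have "(xs i) $ undefined = (xs j) $ undefined" by simp
    then show False using that by (simp add: xs_def)
  qed
  obtain th0 where th0: "\<forall>d<m. th0 d \<in> \<Theta>" "det (rep_matrix f m th0 xs) \<noteq> 0"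
    using nondeg[of m xs] xs_inj by blast
  obtain Bm where Bm: "\<forall>kk<m. \<forall>g<m. (\<Sum>d<m. f (th0 d) (xs kk) * Bm d g) = (if kk = g then 1 else 0)"
    using inv_exists[OF th0(2)] by blast
  define thD where "thD d = (if d < m then th0 d else th0 0)" for d
  have BmD: "(\<Sum>d<m. f (thD d) (xs kk) * Bm d g) = (if kk = g then 1 else 0)" if "kk < m" "g < m" for kk g
  proof -
    have "(\<Sum>d<m. f (thD d) (xs kk) * Bm d g) = (\<Sum>d<m. f (th0 d) (xs kk) * Bm d g)"
      by (rule sum.cong) (auto simp: thD_def)
    then show ?thesis using Bm that by simp
  qed
  define A0 where "A0 j g d = (if d < m \<and> g < m then Bm d g else (0::real))" for j g d :: nat
  define A where "A l j g al = (if l = 1 then 1 else if al = 0 then 1 else (0::real))" for l j g al :: nat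
  define Aout where "Aout yy al = (if L = 1 then 1 else if al = 0 then 1 else (0::real))" for yy al :: nat
  have A': "\<And>l j g al. A (Suc l) j g al = (if l = 0 then 1 else if al = 0 then 1 else 0)"
    by (simp add: A_def)
  show ?thesis
  proof (intro exI conjI allI impI)
    fix d assume "d < M"
    show "thD d \<in> \<Theta>" using th0(1) m1 by (auto simp: thD_def)
  next
    fix Z th' a ay
    assume asm: "(\<forall>d<M. th' d \<in> \<Theta>) \<and>
        real Z < real (min (r 0) M) ^ (N div 2) * 2 / (real M * real N)"
    show "(\<lambda>X. deep_score f L M thD r A0 A Aout y X) \<noteq> (\<lambda>X. shallow_score f N M Z th' a ay y X)"
    proof
      assume eq: "(\<lambda>X. deep_score f L M thD r A0 A Aout y X) = (\<lambda>X. shallow_score f N M Z th' a ay y X)"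
      define R where "R = PiE {..<h} (\<lambda>_. {..<m})"
      define kk where "kk ke ko i = (if i < N then (if even i then ke else ko) (i div 2) else 0)"
        for ke ko :: "nat \<Rightarrow> nat" and i
      define grid where "grid ke ko = (\<lambda>i. xs (kk ke ko i))" for ke ko
      define rho where "rho ke = (\<lambda>ko. deep_score f L M thD r A0 A Aout y (grid ke ko))" for ke
      have finR: "finite R" by (simp add: R_def finite_PiE)
      have cardR: "card R = m ^ h" by (simp add: R_def card_PiE)
      have kkm: "kk ke ko i < m" if "ke \<in> R" "ko \<in> R" for ke ko i
      proof (cases "i < N")
        case True
        then have "i div 2 < h" using Nh by simp
        then show ?thesis using that True by (auto simp: kk_def R_def PiE_iff)
      next
        case False then show ?thesis using m1 by (simp add: kk_def)
      qed
      have val: "rho ke ko = (if ke = ko then 1 else 2)" if ke: "ke \<in> R" and ko: "ko \<in> R" for ke ko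
      proof -
        have u0: "\<And>j g. deep_u f M thD r A0 A (grid ke ko) 0 j g = (if g < m \<and> kk ke ko j = g then 1 else 0)"
          by (rule u0_val[where xs=xs and Bm=Bm]) (auto simp: BmD A0_def mM grid_def kkm ke ko)
        have ds: "deep_score f L M thD r A0 A Aout y (grid ke ko) =
             (if (\<forall>t<2^(L-1). kk ke ko (2*t) = kk ke ko (2*t+1)) then 1 else 2)"
          by (rule deep_score_val[OF u0 kkm[OF ke ko] mr A' r L]) (simp add: Aout_def)
        have "(\<forall>t<2^(L-1). kk ke ko (2*t) = kk ke ko (2*t+1)) \<longleftrightarrow> (\<forall>t<h. ke t = ko t)"
          unfolding hL[symmetric] using Nh by (auto simp: kk_def)
        also have "\<dots> \<longleftrightarrow> ke = ko"
          using ke ko unfolding R_def by (auto intro: PiE_ext)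
        finally show ?thesis using ds by (simp add: rho_def)
      qed
      have ind: "inj_on rho R" "fv.independent (rho ` R)"
        using indep_rows[OF finR, of rho] val by auto
      define w where "w z i q = (\<Sum>d<M. a z i d * f (th' d) (xs q))" for z i q
      define P where "P z ke = Max ((\<lambda>t. relu (w z (2*t) (ke t))) ` {..<h})" for z ke
      define Q where "Q z ko = Max ((\<lambda>t. relu (w z (2*t+1) (ko t))) ` {..<h})" for z ko
      define G where "G z p = (\<lambda>ko. max p (Q z ko))" for z p
      have U1: "x \<in> (\<lambda>t. 2*t) ` {..<h} \<union> (\<lambda>t. 2*t+1) ` {..<h}" if x: "x < N" for x
      proof -
        have xd: "x div 2 < h" using x Nh by auto
        show ?thesis
        proof (cases "even x")
          case True
          then have "x = 2 * (x div 2)" by simp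
          then show ?thesis using xd by blast
        next
          case False
          then have "x = 2 * (x div 2) + 1" by simp
          then show ?thesis using xd by blast
        qed
      qed
      have U: "{..<N} = (\<lambda>t. 2*t) ` {..<h} \<union> (\<lambda>t. 2*t+1) ` {..<h}"
      proof (rule equalityI)
        show "{..<N} \<subseteq> (\<lambda>t. 2*t) ` {..<h} \<union> (\<lambda>t. 2*t+1) ` {..<h}" using U1 by blast
        show "(\<lambda>t. 2*t) ` {..<h} \<union> (\<lambda>t. 2*t+1) ` {..<h} \<subseteq> {..<N}" using Nh by auto
      qed
      have split: "Max ((\<lambda>i. relu (\<Sum>d<M. a z i d * f (th' d) (grid ke ko i))) ` {..<N}) = max (P z ke) (Q z ko)"
        for z ke ko
      proof -
        let ?g = "\<lambda>i. relu (\<Sum>d<M. a z i d * f (th' d) (grid ke ko i))"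
        have e1: "?g ` (\<lambda>t. 2*t) ` {..<h} = (\<lambda>t. relu (w z (2*t) (ke t))) ` {..<h}"
          unfolding image_image by (rule image_cong) (use Nh in \<open>auto simp: w_def grid_def kk_def\<close>)
        have e2: "?g ` (\<lambda>t. 2*t+1) ` {..<h} = (\<lambda>t. relu (w z (2*t+1) (ko t))) ` {..<h}"
          unfolding image_image by (rule image_cong) (use Nh in \<open>auto simp: w_def grid_def kk_def\<close>)
        show ?thesis unfolding U image_Un e1 e2 P_def Q_def
          by (rule Max_Un) (use hne in simp_all)
      qed
      have rhoS: "rho ke = (\<Sum>z<Z. fsc (ay y z) (G z (P z ke)))" for ke
      proof
        fix ko
        have "rho ke ko = shallow_score f N M Z th' a ay y (grid ke ko)"
          unfolding rho_def using fun_cong[OF eq, of "grid ke ko"] by simp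
        also have "\<dots> = (\<Sum>z<Z. ay y z * max (P z ke) (Q z ko))"
          unfolding shallow_score_def using split by simp
        also have "\<dots> = (\<Sum>z<Z. fsc (ay y z) (G z (P z ke))) ko"
          by (simp add: sum_fun_apply fsc_def G_def)
        finally show "rho ke ko = (\<Sum>z<Z. fsc (ay y z) (G z (P z ke))) ko" .
      qed
      define S where "S = (\<Union>z<Z. G z ` P z ` R)"
      have finS: "finite S" using finR by (simp add: S_def)
      have span: "rho ` R \<subseteq> fv.span S"
      proof
        fix v assume "v \<in> rho ` R"
        then obtain ke where ke: "ke \<in> R" "v = rho ke" by auto
        have "(\<Sum>z<Z. fsc (ay y z) (G z (P z ke))) \<in> fv.span S"
          by (rule fv.span_sum, rule fv.span_scale, rule fv.span_base) (use ke in \<open>auto simp: S_def\<close>)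
        then show "v \<in> fv.span S" using ke rhoS by simp
      qed
      have cardP: "card (G z ` P z ` R) \<le> h * m" for z
      proof -
        define W where "W = (\<lambda>(t, q). relu (w z (2*t) q)) ` ({..<h} \<times> {..<m})"
        have "P z ` R \<subseteq> W"
        proof
          fix p assume "p \<in> P z ` R"
          then obtain ke where ke: "ke \<in> R" "p = P z ke" by auto
          have "P z ke \<in> (\<lambda>t. relu (w z (2*t) (ke t))) ` {..<h}"
            unfolding P_def by (rule Max_in) (use hne in simp_all)
          then obtain t where t: "t < h" "P z ke = relu (w z (2*t) (ke t))" by auto
          have "ke t < m" using ke t by (auto simp: R_def PiE_iff)
          then show "p \<in> W" unfolding W_def using t ke by force
        qed
        then have "card (P z ` R) \<le> card W" by (rule card_mono[rotated]) (simp add: W_def)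
        also have "card W \<le> card ({..<h} \<times> {..<m})" unfolding W_def by (rule card_image_le) simp
        also have "\<dots> = h * m" by (simp add: card_cartesian_product)
        finally show ?thesis using card_image_le[of "P z ` R" "G z"] finR by simp
      qed
      have "card S \<le> (\<Sum>z<Z. card (G z ` P z ` R))" unfolding S_def by (rule card_UN_le) simp
      also have "\<dots> \<le> Z * (h * m)" using sum_bounded_above[of "{..<Z}" "\<lambda>z. card (G z ` P z ` R)" "h*m"] cardP by simp
      finally have cS: "card S \<le> Z * (h * m)" .
      have bound: "real Z < real m ^ h * 2 / (real M * real N)" using asm by (simp add: m_def h_def)
      have MN: "real M * real N > 0" using False Nh h1 by simp
      have "real Z * (real M * real N) < real m ^ h * 2" using bound MN by (simp add: field_simps)
      then have "real Z * real M * real h < real m ^ h" using Nh by (simp add: algebra_simps)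
      moreover have "real Z * real h * real m \<le> real Z * real h * real M" using mM by (simp add: mult_left_mono)
      ultimately have "real (Z * (h * m)) < real (m ^ h)" by (simp add: algebra_simps)
      then have "Z * (h * m) < m ^ h" by (simp only: of_nat_less_iff)
      with cS cardR have "card S < card R" by simp
      then show False using rank_contra[OF finS span ind(2) ind(1) _ finR] by simp
    qed
  qed
qed


end
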